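(* Let $0<\beta<\frac12$ and for $z\in\mathbb{C}$ with $|\Re(z)|\neq\beta$ set $$I(\beta,1;z)=\frac{1}{2\pi i}\int_{\beta-i\infty}^{\beta+i\infty}\left(\frac{\cos\pi z}{\cos\pi w}\right)\left(\frac{2w}{z^2-w^2}\right)\mathrm{d}w.$$ Then $I(\beta,1;z)=0$ for all $z$ with $\Re(z)>\beta$. *)

theory Defs
  imports "HOL-Analysis.Analysis"
begin

text \<open>Integrand of I(beta,1;z) along the vertical line Re w = beta,
  parametrised by w = beta + i t (t real), so that dw = i dt.\<close>
definition I_integrand :: "real \<Rightarrow> complex \<Rightarrow> real \<Rightarrow> complex" where
  "I_integrand \<beta> z t =
     (let w = complex_of_real \<beta> + \<i> * complex_of_real t
      in (cos (complex_of_real pi * z) / cos (complex_of_real pi * w)) * (2 * w / (z\<^sup>2 - w\<^sup>2)) * \<i>)"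

definition I_beta1 :: "real \<Rightarrow> complex \<Rightarrow> complex" where
  "I_beta1 \<beta> z = (1 / (2 * complex_of_real pi * \<i>)) * integral UNIV (I_integrand \<beta> z)"

end

theory Submission imports Defs "HOL-Complex_Analysis.Complex_Analysis" begin

lemma cos_lower:
  fixes w :: complex and b :: real
  assumes "0 \<le> b" "b < 1/2" "\<bar>Re w\<bar> \<le> b"
  shows "cos (pi*b) * exp (pi * \<bar>Im w\<bar>) / 2 \<le> cmod (cos (complex_of_real pi * w))"
proof -
  define y where "y = pi * Im w"
  define c0 where "c0 = cos (pi*b)"
  have pb: "0 \<le> pi*b" using assms by simp
  have pb2: "pi*b < pi/2" using assms by simp
  have c0pos: "0 < c0" unfolding c0_def using pb pb2
    by (intro cos_gt_zero_pi) (use pi_gt_zero in linarith)+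
  have c0le: "c0 \<le> 1" unfolding c0_def by simp
  have "cos (pi * b) \<le> cos (pi * \<bar>Re w\<bar>)"
    using assms by (intro cos_monotone_0_pi_le) auto
  also have "cos (pi * \<bar>Re w\<bar>) = cos (pi * Re w)"
    by (cases "Re w \<ge> 0") (auto simp: abs_if)
  finally have cge: "c0 \<le> cos (pi * Re w)" unfolding c0_def .
  hence cge2: "c0^2 \<le> cos (pi * Re w) ^ 2"
    using c0pos by (intro power_mono) auto
  define s where "s = ((exp y + inverse (exp y))/2)^2"
  have s1: "(exp y - inverse (exp y))^2/4 = s - 1"
  proof -
    have "\<And>e::real. e > 0 \<Longrightarrow> (e - inverse e)^2/4 = ((e + inverse e)/2)^2 - 1"
      by (simp add: power2_eq_square field_simps)
    thus ?thesis unfolding s_def by simp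
  qed
  have s_ge1: "1 \<le> s"
  proof -
    have "0 \<le> (exp y - inverse (exp y))^2/4" by simp
    thus ?thesis using s1 by simp
  qed
  have sge: "(exp \<bar>y\<bar> / 2)^2 \<le> s"
    unfolding s_def
  proof (intro power_mono)
    show "exp \<bar>y\<bar> / 2 \<le> (exp y + inverse (exp y)) / 2"
      by (cases "y \<ge> 0") (auto simp: exp_minus[symmetric] abs_if add_increasing2 add_increasing)
  qed simp
  have "cmod (cos (complex_of_real pi * w))^2 = cos (pi * Re w)^2 + (exp y - inverse (exp y))^2/4"
    by (simp add: norm_cos_squared y_def)
  also have "\<dots> \<ge> c0^2 * s"
  proof -
    have "c0^2 * s \<le> c0^2 + (s - 1)"
    proof -
      have "(1 - c0^2) * (s - 1) \<ge> 0" using c0le c0pos s_ge1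
        by (intro mult_nonneg_nonneg) (auto simp: power_le_one)
      thus ?thesis by (simp add: algebra_simps)
    qed
    thus ?thesis using cge2 s1 by linarith
  qed
  finally have "c0^2 * (exp \<bar>y\<bar> / 2)^2 \<le> cmod (cos (complex_of_real pi * w))^2"
    using sge c0pos by (meson dual_order.trans mult_left_mono zero_le_power2)
  hence "(c0 * (exp \<bar>y\<bar> / 2))^2 \<le> cmod (cos (complex_of_real pi * w))^2"
    by (simp add: power_mult_distrib power_divide)
  hence "c0 * (exp \<bar>y\<bar> / 2) \<le> cmod (cos (complex_of_real pi * w))"
    by (rule power2_le_imp_le) simp
  thus ?thesis unfolding c0_def y_def by (simp add: abs_mult)
qed

lemma rat_bound:
  fixes w z :: complex and b :: real
  assumes "\<bar>Re w\<bar> \<le> b" "b < Re z"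
  shows "cmod (2*w/(z^2-w^2)) \<le> 2/(Re z - b) + 2*cmod z/(Re z - b)^2"
proof -
  define d where "d = Re z - b"
  have dpos: "d > 0" using assms unfolding d_def by simp
  have d1: "d \<le> cmod (z - w)"
    using assms complex_Re_le_cmod[of "z-w"] unfolding d_def by auto
  have d2: "d \<le> cmod (z + w)"
    using assms complex_Re_le_cmod[of "z+w"] unfolding d_def by auto
  have fac: "z^2 - w^2 = (z - w) * (z + w)" by (simp add: power2_eq_square algebra_simps)
  have wle: "cmod w \<le> cmod (z + w) + cmod z"
    using norm_triangle_ineq4[of "z+w" z] by simp
  have "cmod (2*w/(z^2-w^2)) = 2 * cmod w / (cmod (z-w) * cmod (z+w))"
    by (simp add: fac norm_divide norm_mult)
  also have "\<dots> \<le> 2 * (cmod (z + w) + cmod z) / (cmod (z-w) * cmod (z+w))"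
    using wle dpos d1 d2 by (intro divide_right_mono) auto
  also have "\<dots> = 2 / cmod (z-w) + 2 * cmod z / (cmod (z-w) * cmod (z+w))"
  proof -
    have n1: "cmod (z-w) \<noteq> 0" "cmod (z+w) \<noteq> 0" using dpos d1 d2 by auto
    show ?thesis unfolding add_divide_distrib distrib_left using n1 by simp
  qed
  also have "\<dots> \<le> 2 / d + 2 * cmod z / (d * d)"
    using dpos d1 d2
    by (intro add_mono divide_left_mono mult_mono mult_pos_pos) auto
  finally show ?thesis unfolding d_def by (simp add: power2_eq_square)
qed

lemma contour_integral_odd_linepath:
  assumes "\<And>w. f (-w) = - f w"
  shows "contour_integral (linepath (-a) (-b)) f = contour_integral (linepath a b) f"
proof -
  have lp: "linepath (-a) (-b) x = - linepath a b x" for x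
    by (simp add: linepath_def algebra_simps)
  show ?thesis unfolding contour_integral_integral
    by (simp add: lp assms algebra_simps)
qed

lemma exp_abs_integrable: "(\<lambda>t::real. exp (-pi*\<bar>t\<bar>)) integrable_on UNIV"
proof -
  have i1: "(\<lambda>t. exp(-pi*t)) integrable_on {0::real..}"
    by (rule integrable_on_exp_minus_to_infinity) simp
  have i1b: "(\<lambda>t. exp(-pi*\<bar>t\<bar>)) integrable_on {0::real..}"
    by (rule integrable_eq[OF i1]) auto
  have a: "(\<lambda>t. exp(-pi*t)) absolutely_integrable_on {0::real..}"
    using i1 by (intro nonnegative_absolutely_integrable_1) auto
  have "(\<lambda>x. exp(-pi*(-x))) absolutely_integrable_on {..0::real}"
    using has_absolute_integral_reflect_real[of "{..0}" "{0..}" "\<lambda>t. exp(-pi*t)"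
        "integral {0..} (\<lambda>t. exp(-pi*t))"] a by auto
  hence "(\<lambda>x. exp(-pi*(-x))) integrable_on {..0::real}"
    using absolutely_integrable_on_def by blast
  hence 2: "(\<lambda>t. exp(-pi*\<bar>t\<bar>)) integrable_on {..0::real}"
    by (rule integrable_eq) auto
  show ?thesis
  proof (rule integrable_Un'[OF 2 i1b])
    have "{..0::real} \<inter> {0..} = {0}" by auto
    thus "negligible ({..0::real} \<inter> {0..})" by simp
  qed auto
qed

lemma seg_horiz:
  assumes "x \<in> closed_segment (Complex a T) (Complex (-a) T)" "0 \<le> a"
  shows "Im x = T" "\<bar>Re x\<bar> \<le> a"
proof -
  obtain u where u: "0 \<le> u" "u \<le> 1" "x = (1 - u) *\<^sub>R Complex a T + u *\<^sub>R Complex (-a) T"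
    using assms unfolding closed_segment_def by auto
  have "Im x = Im ((1 - u) *\<^sub>R Complex a T + u *\<^sub>R Complex (-a) T)" using u(3) by simp
  thus "Im x = T" by (simp add: algebra_simps)
  have "Re x = Re ((1 - u) *\<^sub>R Complex a T + u *\<^sub>R Complex (-a) T)" using u(3) by simp
  hence "Re x = (1 - 2*u) * a" by (simp add: algebra_simps)
  moreover have "\<bar>1 - 2*u\<bar> \<le> 1" using u by auto
  ultimately show "\<bar>Re x\<bar> \<le> a" using assms
    by (simp add: abs_mult mult_left_le_one_le)
qed

lemma f_bound:
  fixes w z :: complex and b :: real
  assumes "0 \<le> b" "b < 1/2" "b < Re z" "\<bar>Re w\<bar> \<le> b"
  shows "cmod (cos (complex_of_real pi * z) / cos (complex_of_real pi * w) * (2*w/(z^2-w^2)))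
     \<le> (2 * cmod (cos (complex_of_real pi * z)) * (2/(Re z - b) + 2*cmod z/(Re z - b)^2) / cos (pi*b))
        * exp (- pi * \<bar>Im w\<bar>)"
proof -
  define M where "M = 2/(Re z - b) + 2*cmod z/(Re z - b)^2"
  define C where "C = cmod (cos (complex_of_real pi * z))"
  have pb: "0 \<le> pi*b" "pi*b < pi/2" using assms by auto
  have c0: "0 < cos (pi*b)"
    using pb by (intro cos_gt_zero_pi) (use pi_gt_zero in linarith)+
  have lo: "cos (pi*b) * exp (pi * \<bar>Im w\<bar>) / 2 \<le> cmod (cos (complex_of_real pi * w))"
    by (rule cos_lower) (use assms in auto)
  have lopos: "0 < cos (pi*b) * exp (pi * \<bar>Im w\<bar>) / 2" using c0 by simp
  have rb: "cmod (2*w/(z^2-w^2)) \<le> M" unfolding M_def by (rule rat_bound) (use assms in auto)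
  have "cmod (cos (complex_of_real pi * z) / cos (complex_of_real pi * w) * (2*w/(z^2-w^2)))
       = C / cmod (cos (complex_of_real pi * w)) * cmod (2*w/(z^2-w^2))"
    by (simp add: C_def norm_mult norm_divide)
  also have "\<dots> \<le> C / (cos (pi*b) * exp (pi * \<bar>Im w\<bar>) / 2) * M"
  proof (intro mult_mono divide_left_mono)
    show "0 < cmod (cos (complex_of_real pi * w)) * (cos (pi * b) * exp (pi * \<bar>Im w\<bar>) / 2)"
      using lo lopos by (intro mult_pos_pos) auto
  qed (use lo lopos rb in \<open>auto simp: C_def\<close>)
  also have "\<dots> = (2 * C * M / cos (pi*b)) * exp (- pi * \<bar>Im w\<bar>)"
    using c0 by (simp add: field_simps exp_minus)
  finally show ?thesis unfolding M_def C_def .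
qed

lemma f_nonzero:
  fixes w z :: complex and b :: real
  assumes "0 \<le> b" "b < 1/2" "b < Re z" "\<bar>Re w\<bar> \<le> b"
  shows "cos (complex_of_real pi * w) \<noteq> 0" "z^2 - w^2 \<noteq> 0"
proof -
  have pb: "0 \<le> pi*b" "pi*b < pi/2" using assms by auto
  have c0: "0 < cos (pi*b)"
    using pb by (intro cos_gt_zero_pi) (use pi_gt_zero in linarith)+
  have lo: "cos (pi*b) * exp (pi * \<bar>Im w\<bar>) / 2 \<le> cmod (cos (complex_of_real pi * w))"
    by (rule cos_lower) (use assms in auto)
  have lopos: "0 < cos (pi*b) * exp (pi * \<bar>Im w\<bar>) / 2" using c0 by simp
  show "cos (complex_of_real pi * w) \<noteq> 0" using lo lopos by auto
  have fac: "z^2 - w^2 = (z - w) * (z + w)" by (simp add: power2_eq_square algebra_simps)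
  have "Re (z - w) > 0" "Re (z + w) > 0" using assms by auto
  hence "z - w \<noteq> 0" "z + w \<noteq> 0" by (metis less_irrefl zero_complex.sel(1))+
  thus "z^2 - w^2 \<noteq> 0" unfolding fac by simp
qed

lemma sum_cancel: "(X::complex) + (Y + (X + Y)) = 0 \<Longrightarrow> X = - Y"
proof -
  assume "X + (Y + (X + Y)) = 0"
  hence "2 * (X + Y) = 0" by (simp add: algebra_simps)
  hence "X + Y = 0" by (metis mult_eq_0_iff zero_neq_numeral)
  thus ?thesis by (simp add: eq_neg_iff_add_eq_0)
qed

lemma main_result:
  fixes \<beta> :: real and z :: complex
  assumes "0 < \<beta>" and "\<beta> < 1/2" and "Re z > \<beta>"
  defines "f \<equiv> (\<lambda>w. cos (complex_of_real pi * z) / cos (complex_of_real pi * w) * (2*w/(z^2-w^2)))"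
  shows "(\<lambda>t. f (Complex \<beta> t) * \<i>) integrable_on UNIV \<and> integral UNIV (\<lambda>t. f (Complex \<beta> t) * \<i>) = 0"
proof -
  define h where "h = (\<lambda>t. f (Complex \<beta> t) * \<i>)"
  define b' where "b' = (\<beta> + min (1/2) (Re z))/2"
  have b': "\<beta> < b'" "b' < 1/2" "b' < Re z" using assms unfolding b'_def by auto
  define S where "S = {w. Re w < b'} \<inter> {w. Re w > -b'}"
  define K where "K = 2 * cmod (cos (complex_of_real pi * z)) * (2/(Re z - \<beta>) + 2*cmod z/(Re z - \<beta>)^2) / cos (pi*\<beta>)"
  have fb: "cmod (f w) \<le> K * exp (- pi * \<bar>Im w\<bar>)" if "\<bar>Re w\<bar> \<le> \<beta>" for w
    unfolding f_def K_def by (rule f_bound) (use assms that in auto)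
  have nz: "cos (complex_of_real pi * w) \<noteq> 0 \<and> z^2 - w^2 \<noteq> 0" if "w \<in> S" for w
  proof -
    have "\<bar>Re w\<bar> \<le> b'" using that unfolding S_def by auto
    thus ?thesis using f_nonzero[of b' z w] b' assms by auto
  qed
  have holf: "f holomorphic_on S" unfolding f_def using nz by (intro holomorphic_intros) auto
  have openS: "open S" unfolding S_def
    by (intro open_Int open_halfspace_Re_lt open_halfspace_Re_gt)
  have convS: "convex S" unfolding S_def
    by (intro convex_Int convex_halfspace_Re_lt convex_halfspace_Re_gt)
  have contf: "continuous_on S f" using holf holomorphic_on_imp_continuous_on by blast
  have odd: "f (-w) = - f w" for w unfolding f_def by simp
  have inS: "Complex x y \<in> S" if "\<bar>x\<bar> \<le> \<beta>" for x y
    using that b' unfolding S_def by auto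
  have ci: "f contour_integrable_on linepath p q" if "p \<in> S" "q \<in> S" for p q
    by (rule contour_integrable_holomorphic_simple[OF holf openS])
       (use closed_segment_subset[OF that convS] in auto)
  have hc: "(f has_contour_integral contour_integral (linepath p q) f) (linepath p q)"
    if "p \<in> S" "q \<in> S" for p q using ci[OF that] by (rule has_contour_integral_integral)
  have rect: "contour_integral (linepath (Complex \<beta> (-T)) (Complex \<beta> T)) f
      = - contour_integral (linepath (Complex \<beta> T) (Complex (-\<beta>) T)) f" for T
  proof -
    define A where "A = Complex \<beta> (-T)"
    define B where "B = Complex \<beta> T"
    define C where "C = Complex (-\<beta>) T"
    define D where "D = Complex (-\<beta>) (-T)"
    have pts: "A \<in> S" "B \<in> S" "C \<in> S" "D \<in> S" unfolding A_def B_def C_def D_def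
      using assms by (auto intro: inS)
    have CD: "C = -A" "D = -B" unfolding A_def B_def C_def D_def by (auto simp: complex_eq_iff)
    define g where "g = linepath A B +++ (linepath B C +++ (linepath C D +++ linepath D A))"
    have "(f has_contour_integral (contour_integral (linepath A B) f + (contour_integral (linepath B C) f
        + (contour_integral (linepath C D) f + contour_integral (linepath D A) f)))) g"
      unfolding g_def using pts
      by (intro has_contour_integral_join hc valid_path_join) auto
    moreover have "(f has_contour_integral 0) g"
    proof (rule Cauchy_theorem_convex_simple[OF holf convS])
      show "valid_path g" unfolding g_def by (intro valid_path_join) auto
      have "path_image g = closed_segment A B \<union> (closed_segment B C \<union> (closed_segment C D \<union> closed_segment D A))"
        unfolding g_def by (simp add: path_image_join)
      also have "\<dots> \<subseteq> S" using closed_segment_subset[OF _ _ convS] pts by (simp add: Un_least)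
      finally show "path_image g \<subseteq> S" .
      show "pathfinish g = pathstart g" unfolding g_def by auto
    qed
    ultimately have sum0: "contour_integral (linepath A B) f + (contour_integral (linepath B C) f
        + (contour_integral (linepath C D) f + contour_integral (linepath D A) f)) = 0"
      using has_contour_integral_unique by blast
    have e1: "contour_integral (linepath C D) f = contour_integral (linepath A B) f"
      unfolding CD by (rule contour_integral_odd_linepath) (rule odd)
    have e2: "contour_integral (linepath D A) f = contour_integral (linepath B C) f"
    proof -
      have "D = -B" "A = -C" using CD by auto
      thus ?thesis by (simp only:) (rule contour_integral_odd_linepath, rule odd)
    qed
    show ?thesis using sum0[unfolded e1 e2] unfolding A_def B_def C_def by (rule sum_cancel)
  qed
  have c0: "0 < cos (pi*\<beta>)"
  proof -
    have "0 \<le> pi*\<beta>" "pi*\<beta> < pi/2" using assms by auto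
    thus ?thesis by (intro cos_gt_zero_pi) (use pi_gt_zero in linarith)+
  qed
  have K0: "0 \<le> K" unfolding K_def using c0 assms
    by (intro divide_nonneg_pos mult_nonneg_nonneg add_nonneg_nonneg) auto
  have hV: "integral {-T..T} h = contour_integral (linepath (Complex \<beta> (-T)) (Complex \<beta> T)) f"
    if "T > 0" for T
  proof -
    let ?V = "contour_integral (linepath (Complex \<beta> (-T)) (Complex \<beta> T)) f"
    have "(f has_contour_integral ?V) (linepath (Complex \<beta> (-T)) (Complex \<beta> T))"
      by (rule hc) (use assms in \<open>auto intro: inS\<close>)
    hence "((\<lambda>t. f (Complex \<beta> t)) has_integral (-\<i> * ?V)) {-T..T}"
      using has_contour_integral_linepath_same_Re_iff[of "Complex \<beta> (-T)" \<beta> "Complex \<beta> T" "-T" T f ?V]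
        that by simp
    hence "(h has_integral (-\<i> * ?V * \<i>)) {-T..T}"
      unfolding h_def by (rule has_integral_mult_left)
    moreover have "-\<i> * ?V * \<i> = ?V"
      by (metis complex_i_mult_minus minus_minus mult.commute mult_minus_left mult_minus_right)
    ultimately show ?thesis by (simp add: integral_unique)
  qed
  have Hb: "norm (contour_integral (linepath (Complex \<beta> T) (Complex (-\<beta>) T)) f)
      \<le> K * exp (-pi*\<bar>T\<bar>) * (2*\<beta>)" for T
  proof -
    have "norm (contour_integral (linepath (Complex \<beta> T) (Complex (-\<beta>) T)) f)
       \<le> K * exp (-pi*\<bar>T\<bar>) * norm (Complex (-\<beta>) T - Complex \<beta> T)"
    proof (rule has_contour_integral_bound_linepath)
      show "(f has_contour_integral contour_integral (linepath (Complex \<beta> T) (Complex (-\<beta>) T)) f)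
          (linepath (Complex \<beta> T) (Complex (-\<beta>) T))"
        by (rule hc) (use assms in \<open>auto intro: inS\<close>)
      show "0 \<le> K * exp (-pi*\<bar>T\<bar>)" using K0 by simp
      fix x assume "x \<in> closed_segment (Complex \<beta> T) (Complex (-\<beta>) T)"
      with seg_horiz[OF this] assms have "Im x = T" "\<bar>Re x\<bar> \<le> \<beta>" by auto
      thus "norm (f x) \<le> K * exp (-pi*\<bar>T\<bar>)" using fb by auto
    qed
    also have "norm (Complex (-\<beta>) T - Complex \<beta> T) = 2*\<beta>"
    proof -
      have "Complex (-\<beta>) T - Complex \<beta> T = complex_of_real (-2*\<beta>)" by (simp add: complex_eq_iff)
      thus ?thesis using assms by simp
    qed
    finally show ?thesis .
  qed
  have conth: "continuous_on UNIV h"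
  proof -
    have c1: "continuous_on UNIV (\<lambda>t. Complex \<beta> t)"
      unfolding Complex_eq by (intro continuous_intros)
    have "continuous_on UNIV (\<lambda>t. f (Complex \<beta> t))"
      by (rule continuous_on_compose2[OF contf c1]) (use assms in \<open>auto intro: inS\<close>)
    thus ?thesis unfolding h_def by (intro continuous_intros)
  qed
  define F where "F n = (\<lambda>t. if t \<in> {-real (Suc n)..real (Suc n)} then h t else 0)" for n
  define G where "G = (\<lambda>t. K * exp(-pi*\<bar>t\<bar>))"
  have Fint: "F n integrable_on UNIV" for n
    unfolding F_def integrable_restrict_UNIV
    by (rule integrable_continuous_interval) (rule continuous_on_subset[OF conth], auto)
  have Gint: "G integrable_on UNIV"
    using integrable_on_cmult_left[OF exp_abs_integrable, of K] by (simp add: G_def)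
  have hb: "norm (h t) \<le> G t" for t
  proof -
    have "norm (h t) = cmod (f (Complex \<beta> t))" by (simp add: h_def norm_mult)
    also have "\<dots> \<le> K * exp (- pi * \<bar>Im (Complex \<beta> t)\<bar>)" by (rule fb) (use assms in auto)
    finally show ?thesis by (simp add: G_def)
  qed
  have le: "norm (F n t) \<le> G t" for n t
    using hb K0 by (auto simp: F_def G_def)
  have conv: "(\<lambda>n. F n t) \<longlonglongrightarrow> h t" for t
  proof (rule tendsto_eventually)
    show "\<forall>\<^sub>F n in sequentially. F n t = h t"
    proof (rule eventually_sequentiallyI[of "nat \<lceil>\<bar>t\<bar>\<rceil>"])
      fix n assume "nat \<lceil>\<bar>t\<bar>\<rceil> \<le> n"
      hence "\<bar>t\<bar> \<le> real n" by linarith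
      thus "F n t = h t" by (auto simp: F_def)
    qed
  qed
  note dc = dominated_convergence[OF Fint Gint le conv]
  have intF: "integral UNIV (F n) = - contour_integral (linepath (Complex \<beta> (real (Suc n))) (Complex (-\<beta>) (real (Suc n)))) f" for n
    unfolding F_def integral_restrict_UNIV using hV[of "real (Suc n)"] rect[of "real (Suc n)"] by simp
  have e0: "(\<lambda>n. exp (-pi * real n)) \<longlonglongrightarrow> 0"
  proof -
    have "(\<lambda>n. exp (-pi) ^ n) \<longlonglongrightarrow> 0" by (rule LIMSEQ_power_zero) simp
    moreover have "exp (-pi) ^ n = exp (-pi * real n)" for n
      by (simp add: exp_of_nat_mult[symmetric] mult.commute)
    ultimately show ?thesis by simp
  qed
  have g0: "(\<lambda>n. K * exp (-pi * \<bar>real (Suc n)\<bar>) * (2*\<beta>)) \<longlonglongrightarrow> 0"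
  proof -
    have "(\<lambda>n. exp (-pi * real (Suc n))) \<longlonglongrightarrow> 0" using e0 by (rule LIMSEQ_Suc)
    hence "(\<lambda>n. K * exp (-pi * real (Suc n)) * (2*\<beta>)) \<longlonglongrightarrow> 0"
      by (intro tendsto_mult_right_zero tendsto_mult_left_zero)
    thus ?thesis by simp
  qed
  have lim0: "(\<lambda>n. integral UNIV (F n)) \<longlonglongrightarrow> 0"
  proof (rule Lim_null_comparison[OF _ g0])
    show "\<forall>\<^sub>F n in sequentially. norm (integral UNIV (F n)) \<le> K * exp (-pi * \<bar>real (Suc n)\<bar>) * (2*\<beta>)"
    proof (rule always_eventually, rule allI)
      fix n
      show "norm (integral UNIV (F n)) \<le> K * exp (-pi * \<bar>real (Suc n)\<bar>) * (2*\<beta>)"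
        unfolding intF norm_minus_cancel by (rule Hb)
    qed
  qed
  have "integral UNIV h = 0" using LIMSEQ_unique[OF dc(2) lim0] .
  thus ?thesis using dc(1) unfolding h_def by simp
qed

theorem corollary3p5:
  fixes \<beta> :: real and z :: complex
  assumes "0 < \<beta>" and "\<beta> < 1/2" and "Re z > \<beta>"
  shows "I_integrand \<beta> z integrable_on UNIV \<and> I_beta1 \<beta> z = 0"
proof -
  have eq: "I_integrand \<beta> z = (\<lambda>t. (\<lambda>w. cos (complex_of_real pi * z) / cos (complex_of_real pi * w) * (2*w/(z^2-w^2))) (Complex \<beta> t) * \<i>)"
    by (simp add: fun_eq_iff I_integrand_def Let_def Complex_eq)
  show ?thesis using main_result[OF assms] unfolding I_beta1_def eq by simp
qed

end
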